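(* Let $m,n,k$ be positive integers, let $X_1,\ldots,X_k$ be pairwise disjoint $2$-element subsets of $[m]$, and let $Y_1,\ldots,Y_k$ be arbitrary $2$-element subsets of $[n]$. Then the number $S_{22}(m,n,k)$ of functions $f:[m]\to[n]$ such that $f(X_i)\neq Y_i$ for $i=1,2,\ldots,k$ equals $$S_{22}(m,n,k)=\sum_{i=0}^k(-2)^i\binom{k}{i}n^{m-2i}=n^{m-2k}(n^2-2)^k.$$
   Context: $[n]=\{1,\ldots,n\}$. *)

theory Defs
  imports Main "HOL-Library.FuncSet"
begin

definition S22 :: "nat \<Rightarrow> nat \<Rightarrow> nat \<Rightarrow> (nat \<Rightarrow> nat set) \<Rightarrow> (nat \<Rightarrow> nat set) \<Rightarrow> nat" where
  "S22 m n k X Y = card {f \<in> {1..m} \<rightarrow>\<^sub>E {1..n}. \<forall>i\<in>{1..k}. f ` X i \<noteq> Y i}"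

end

theory Submission imports Defs begin

lemma two:
  assumes "card X = 2" "card Y = 2" "Y \<subseteq> B" "finite B"
  shows "card {h \<in> X \<rightarrow>\<^sub>E B. h ` X \<noteq> Y} = card B ^ 2 - 2"
proof -
  obtain a b where X: "X = {a,b}" "a \<noteq> b" using assms(1) card_2_iff by metis
  obtain c d where Y: "Y = {c,d}" "c \<noteq> d" using assms(2) card_2_iff by metis
  have cd: "c \<in> B" "d \<in> B" using assms(3) Y by auto
  have fin: "finite X" using X by simp
  have e: "{h \<in> X \<rightarrow>\<^sub>E B. h ` X = Y} = {(\<lambda>x. if x = a then c else if x = b then d else undefined),
     (\<lambda>x. if x = a then d else if x = b then c else undefined)}" (is "?L = {?h1, ?h2}")
  proof
    show "?L \<subseteq> {?h1, ?h2}"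
    proof
      fix h assume h: "h \<in> ?L"
      then have im: "{h a, h b} = {c, d}" and ext: "\<And>x. x \<notin> {a,b} \<Longrightarrow> h x = undefined"
        using X Y by (auto simp: PiE_def extensional_def)
      then have "(h a = c \<and> h b = d) \<or> (h a = d \<and> h b = c)" using Y(2) by (auto simp: doubleton_eq_iff)
      then show "h \<in> {?h1, ?h2}" using ext X(2) by (auto simp: fun_eq_iff)
    qed
  next
    show "{?h1, ?h2} \<subseteq> ?L" using X Y cd by auto
  qed
  have ne: "?h1 \<noteq> ?h2" using Y(2) by (metis)
  have "{h \<in> X \<rightarrow>\<^sub>E B. h ` X \<noteq> Y} = (X \<rightarrow>\<^sub>E B) - {h \<in> X \<rightarrow>\<^sub>E B. h ` X = Y}" by auto
  then have "card {h \<in> X \<rightarrow>\<^sub>E B. h ` X \<noteq> Y} = card (X \<rightarrow>\<^sub>E B) - card {h \<in> X \<rightarrow>\<^sub>E B. h ` X = Y}"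
    by (simp add: card_Diff_subset finite_PiE fin assms(4))
  also have "\<dots> = card B ^ 2 - 2" using e ne by (simp add: card_PiE fin assms(1))
  finally show ?thesis .
qed

lemma main:
  assumes "finite I" "finite A" "finite B"
    "\<forall>i\<in>I. X i \<subseteq> A \<and> card (X i) = 2"
    "\<forall>i\<in>I. \<forall>j\<in>I. i \<noteq> j \<longrightarrow> X i \<inter> X j = {}"
    "\<forall>i\<in>I. Y i \<subseteq> B \<and> card (Y i) = 2"
  shows "card {f \<in> A \<rightarrow>\<^sub>E B. \<forall>i\<in>I. f ` X i \<noteq> Y i} = card B ^ (card A - 2 * card I) * (card B ^ 2 - 2) ^ card I"
  using assms
proof (induction I arbitrary: A rule: finite_induct)
  case empty
  then show ?case by (simp add: card_PiE)
next
  case (insert j I)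
  define A' where "A' = A - X j"
  have XjA: "X j \<subseteq> A" "card (X j) = 2" using insert.prems by auto
  have finXj: "finite (X j)" using XjA(2) card.infinite by fastforce
  have disj: "\<And>i. i \<in> I \<Longrightarrow> X i \<inter> X j = {}" using insert.prems(4) insert.hyps(2) by (metis insertCI)
  have sub: "\<forall>i\<in>I. X i \<subseteq> A'" using insert.prems(3) disj unfolding A'_def by blast
  have IH: "card {f \<in> A' \<rightarrow>\<^sub>E B. \<forall>i\<in>I. f ` X i \<noteq> Y i} = card B ^ (card A' - 2 * card I) * (card B ^ 2 - 2) ^ card I"
    using insert.IH[of A'] insert.prems sub unfolding A'_def by auto
  let ?S = "{f \<in> A \<rightarrow>\<^sub>E B. \<forall>i\<in>insert j I. f ` X i \<noteq> Y i}"
  let ?S1 = "{f \<in> A' \<rightarrow>\<^sub>E B. \<forall>i\<in>I. f ` X i \<noteq> Y i}"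
  let ?S2 = "{h \<in> X j \<rightarrow>\<^sub>E B. h ` X j \<noteq> Y j}"
  have bij: "bij_betw (\<lambda>f. (restrict f A', restrict f (X j))) ?S (?S1 \<times> ?S2)"
  proof (rule bij_betw_byWitness[where f'="\<lambda>(g,h). \<lambda>x. if x \<in> X j then h x else g x"])
    show "\<forall>f\<in>?S. (\<lambda>(g,h). \<lambda>x. if x \<in> X j then h x else g x) (restrict f A', restrict f (X j)) = f"
      by (auto simp: fun_eq_iff A'_def PiE_def extensional_def)
    show "\<forall>p\<in>?S1 \<times> ?S2. (\<lambda>f. (restrict f A', restrict f (X j))) ((\<lambda>(g,h). \<lambda>x. if x \<in> X j then h x else g x) p) = p"
      by (auto simp: fun_eq_iff A'_def PiE_def extensional_def)
    show "(\<lambda>f. (restrict f A', restrict f (X j))) ` ?S \<subseteq> ?S1 \<times> ?S2"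
    proof (rule image_subsetI)
      fix f assume f: "f \<in> ?S"
      have "\<And>i. i \<in> I \<Longrightarrow> restrict f A' ` X i = f ` X i" using sub by (auto simp: image_def) 
      moreover have "restrict f (X j) ` X j = f ` X j" by auto
      ultimately show "(restrict f A', restrict f (X j)) \<in> ?S1 \<times> ?S2" using f XjA by (auto simp: A'_def)
    qed
    show "(\<lambda>(g,h). \<lambda>x. if x \<in> X j then h x else g x) ` (?S1 \<times> ?S2) \<subseteq> ?S"
    proof (rule image_subsetI)
      fix p assume "p \<in> ?S1 \<times> ?S2"
      then obtain g h where p: "p = (g,h)" and g: "g \<in> ?S1" and h: "h \<in> ?S2" by auto
      let ?f = "\<lambda>x. if x \<in> X j then h x else g x"
      have "\<And>i. i \<in> I \<Longrightarrow> ?f ` X i = g ` X i"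
        using disj by (force simp: image_def)
      moreover have "?f ` X j = h ` X j" by auto
      moreover have "?f \<in> A \<rightarrow>\<^sub>E B" using g h XjA by (auto simp: A'_def PiE_def extensional_def)
      ultimately show "(\<lambda>(g,h). \<lambda>x. if x \<in> X j then h x else g x) p \<in> ?S" using g h p by auto
    qed
  qed
  have "card ?S = card ?S1 * card ?S2" using bij_betw_same_card[OF bij] by (simp add: card_cartesian_product)
  also have "card ?S2 = card B ^ 2 - 2" using two[of "X j" "Y j" B] XjA insert.prems by auto
  moreover have cA: "card A' = card A - 2" unfolding A'_def using XjA finXj by (simp add: card_Diff_subset)
  ultimately show ?case using IH insert.hyps by (simp add: algebra_simps)
qed

theorem corollary5:
  fixes m n k :: nat and X Y :: "nat \<Rightarrow> nat set"
  assumes "m > 0" and "n > 0" and "k > 0"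
    and "\<And>i. i \<in> {1..k} \<Longrightarrow> X i \<subseteq> {1..m} \<and> card (X i) = 2"
    and "\<And>i j. i \<in> {1..k} \<Longrightarrow> j \<in> {1..k} \<Longrightarrow> i \<noteq> j \<Longrightarrow> X i \<inter> X j = {}"
    and "\<And>i. i \<in> {1..k} \<Longrightarrow> Y i \<subseteq> {1..n} \<and> card (Y i) = 2"
  shows "int (S22 m n k X Y) = (\<Sum>i=0..k. (-2)^i * int (k choose i) * int n ^ (m - 2*i))
       \<and> int (S22 m n k X Y) = int n ^ (m - 2*k) * (int n ^ 2 - 2) ^ k"
proof -
  have nat: "S22 m n k X Y = n ^ (m - 2*k) * (n^2 - 2) ^ k"
    unfolding S22_def using main[where I="{1..k}" and A="{1..m}" and B="{1..n}" and X=X and Y=Y] assms by auto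
  have "card (Y 1) = 2" "Y 1 \<subseteq> {1..n}" using assms(3) assms(6)[of 1] by auto
  then have "2 \<le> card {1..n}" by (metis card_mono finite_atLeastAtMost)
  then have n2: "n \<ge> 2" by simp
  then have "n^2 \<ge> 2" by (metis le_trans power2_nat_le_imp_le self_le_power zero_less_numeral nat_le_linear) 
  then have i1: "int (S22 m n k X Y) = int n ^ (m - 2*k) * (int n ^ 2 - 2) ^ k"
    using nat by (simp add: of_nat_diff)
  have fin: "\<And>i. i \<in> {1..k} \<Longrightarrow> finite (X i)" using assms(4) by (meson finite_atLeastAtMost finite_subset)
  have "card (\<Union>i\<in>{1..k}. X i) = (\<Sum>i\<in>{1..k}. card (X i))"
    using fin assms(5) by (intro card_UN_disjoint) auto
  also have "\<dots> = 2 * k" using assms(4) by simp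
  finally have "2*k \<le> m" using assms(4) 
    by (metis (no_types, lifting) UN_subset_iff card_atLeastAtMost card_mono diff_Suc_1 finite_atLeastAtMost)
  have "int n ^ (m - 2*k) * (int n ^ 2 - 2) ^ k = int n ^ (m - 2*k) * (\<Sum>i=0..k. of_nat (k choose i) * (-2)^i * (int n^2)^(k-i))"
    using binomial_ring[of "-2" "int n ^ 2" k] by (simp add: atLeast0AtMost)
  also have "\<dots> = (\<Sum>i=0..k. (-2)^i * int (k choose i) * int n ^ (m - 2*i))"
    unfolding sum_distrib_left
  proof (rule sum.cong)
    fix i assume "i \<in> {0..k}"
    then have "m - 2*i = (m - 2*k) + 2*(k-i)" using \<open>2*k \<le> m\<close> by auto
    then show "int n ^ (m - 2*k) * (of_nat (k choose i) * (-2)^i * (int n^2)^(k-i)) = (-2)^i * int (k choose i) * int n ^ (m - 2*i)"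
      by (simp add: power_add power_mult)
  qed simp
  finally show ?thesis using i1 by simp
qed

end
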